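(* Let $l<u$ be real, $D=[l,u]$, $b>0$, and let $\Delta Q$ be a real number with $0<\Delta Q\le u-l$. For $p\in D$ let $C_p=\int_l^u\frac{1}{2b}e^{-\frac{|x-p|}{b}}\,dx$. Then $$\max_{\substack{q,q'\in D\\ |q'-q|\le \Delta Q}} \frac{C_{q'}}{C_q}\,e^{\frac{|q'-q|}{b}} = \frac{C_{l+\Delta Q}}{C_l}\,e^{\frac{\Delta Q}{b}}.$$
   Context: Equivalently $C_p = 1-\frac{1}{2}\left(e^{-\frac{p-l}{b}}+e^{-\frac{u-p}{b}}\right)$ for $p\in D$. *)

theory Defs
  imports "HOL-Analysis.Analysis"
begin

definition laplace_mass :: "real \<Rightarrow> real \<Rightarrow> real \<Rightarrow> real \<Rightarrow> real" where
  "laplace_mass l u b p = integral {l..u} (\<lambda>x. 1 / (2 * b) * exp (- \<bar>x - p\<bar> / b))"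

end

theory Submission
  imports Defs
begin

definition K :: "real \<Rightarrow> real \<Rightarrow> real \<Rightarrow> real \<Rightarrow> real" where
  "K l u b p = 1 - (exp (- (p - l) / b) + exp (- (u - p) / b)) / 2"

lemma mass_eq:
  fixes l u b p :: real
  assumes "b > 0" "l \<le> p" "p \<le> u"
  shows "laplace_mass l u b p = K l u b p"
proof -
  let ?f = "\<lambda>x. 1 / (2 * b) * exp (- \<bar>x - p\<bar> / b)"
  have d1: "((\<lambda>x. exp ((x - p) / b) / 2) has_vector_derivative exp ((x - p) / b) / (2 * b)) (at x within {l..p})" for x
    unfolding has_real_derivative_iff_has_vector_derivative[symmetric]
    using assms by (auto intro!: derivative_eq_intros simp: field_simps)
  have d2: "((\<lambda>x. - exp (- (x - p) / b) / 2) has_vector_derivative exp (- (x - p) / b) / (2 * b)) (at x within {p..u})" for x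
    unfolding has_real_derivative_iff_has_vector_derivative[symmetric]
    using assms by (auto intro!: derivative_eq_intros simp: field_simps)
  have i1: "((\<lambda>x. exp ((x - p) / b) / (2 * b)) has_integral (exp ((p - p) / b) / 2 - exp ((l - p) / b) / 2)) {l..p}"
    using fundamental_theorem_of_calculus[OF assms(2) d1] by simp
  have i1'': "(?f has_integral (exp ((p - p) / b) / 2 - exp ((l - p) / b) / 2)) {l..p}"
    proof (rule has_integral_eq[OF _ i1])
    fix x assume "x \<in> {l..p}"
    then have "- \<bar>x - p\<bar> / b = (x - p) / b" by (simp add: abs_if divide_simps)
    then show "exp ((x - p) / b) / (2 * b) = ?f x" by simp
  qed
  have "exp ((p - p) / b) / 2 - exp ((l - p) / b) / 2 = 1/2 - exp (- (p - l) / b) / 2"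
    by (simp add: minus_diff_eq)
  with i1'' have i1': "(?f has_integral (1/2 - exp (- (p - l) / b) / 2)) {l..p}" by simp
  have i2: "((\<lambda>x. exp (- (x - p) / b) / (2 * b)) has_integral (- exp (- (u - p) / b) / 2 - - exp (- (p - p) / b) / 2)) {p..u}"
    using fundamental_theorem_of_calculus[OF assms(3) d2] by simp
  have i2'': "(?f has_integral (- exp (- (u - p) / b) / 2 - - exp (- (p - p) / b) / 2)) {p..u}"
    proof (rule has_integral_eq[OF _ i2])
    fix x assume "x \<in> {p..u}"
    then have "- \<bar>x - p\<bar> / b = - (x - p) / b" by (simp add: abs_if divide_simps)
    then show "exp (- (x - p) / b) / (2 * b) = ?f x" by simp
  qed
  then have i2': "(?f has_integral (1/2 - exp (- (u - p) / b) / 2)) {p..u}" by simp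
  have "(?f has_integral K l u b p) {l..u}"
    proof -
    have "1/2 - exp (- (p - l) / b) / 2 + (1/2 - exp (- (u - p) / b) / 2) = K l u b p"
      by (simp add: K_def field_simps)
    then show ?thesis using has_integral_combine[OF assms(2,3) i1' i2'] by simp
  qed
  then show ?thesis unfolding laplace_mass_def by (rule integral_unique)
qed

lemma poly_ineq:
  fixes x y E :: real
  assumes "0 < x" "x \<le> 1" "0 < y" "y \<le> 1" "0 < E" "E \<le> x * y"
  shows "(2 - x*y - E/(x*y))*(1-E) \<le> (2-y-E/y)*(2-x-E/x)"
proof -
  have key: "2*x*y - E*(x+y+x*y-1) \<ge> 0"
  proof (cases "x+y+x*y-1 \<le> 0")
    case True then show ?thesis using assms
      by (smt (verit) mult_nonneg_nonpos mult_pos_pos)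
  next
    case False
    have "E*(x+y+x*y-1) \<le> (x*y)*(x+y+x*y-1)" using False assms by (intro mult_right_mono) auto
    also have "\<dots> \<le> (x*y)*2" proof (intro mult_left_mono)
      have "x*y \<le> 1" using assms mult_le_one[of x y] by simp
      then show "x+y+x*y-1 \<le> 2" using assms by linarith
    qed (use assms in auto)
    finally show ?thesis by simp
  qed
  have fac: "(2*y-y^2-E)*(2*x-x^2-E) - (2*x*y-x^2*y^2-E)*(1-E) = (1-x)*(1-y)*(2*x*y - E*(x+y+x*y-1))"
    by (simp add: algebra_simps power2_eq_square)
  have "0 \<le> (1-x)*(1-y)*(2*x*y - E*(x+y+x*y-1))" using assms key by simp
  then have P: "(2*x*y-x^2*y^2-E)*(1-E) \<le> (2*y-y^2-E)*(2*x-x^2-E)" using fac by linarith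
  have e1: "(2 - x*y - E/(x*y))*(1-E) = (2*x*y-x^2*y^2-E)*(1-E) / (x*y)"
    using assms by (simp add: field_simps power2_eq_square)
  have e2: "(2-y-E/y)*(2-x-E/x) = (2*y-y^2-E)*(2*x-x^2-E) / (x*y)"
    using assms by (simp add: field_simps power2_eq_square)
  show ?thesis unfolding e1 e2 using P assms by (intro divide_right_mono) auto
qed

locale setting =
  fixes l u b :: real
  assumes lu: "l < u" and bpos: "b > 0"
begin

abbreviation "E \<equiv> exp (- (u - l) / b)"

lemma K_pos: assumes "l \<le> p" "p \<le> u" shows "K l u b p > 0"
proof -
  have a: "exp (- (p - l) / b) \<le> 1" "exp (- (u - p) / b) \<le> 1" using assms bpos by (auto simp: divide_nonpos_pos)
  have "exp (- (p - l) / b) < 1 \<or> exp (- (u - p) / b) < 1"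
  proof (cases "p = l")
    case True then show ?thesis using lu bpos by (auto simp: divide_neg_pos)
  next
    case False then show ?thesis using assms bpos by (auto simp: divide_neg_pos)
  qed
  then have "exp (- (p - l) / b) + exp (- (u - p) / b) < 2" using a by (elim disjE) linarith+
  then show ?thesis unfolding K_def by (simp add: field_simps)
qed

lemma K_sym: "K l u b (l + u - p) = K l u b p"
  unfolding K_def by (simp add: algebra_simps)

lemma case1:
  assumes "l \<le> q" "q \<le> q'" "q' \<le> u"
  shows "K l u b q' / K l u b q \<le> K l u b (l + (q' - q)) / K l u b l"
proof -
  define x where "x = exp (- (q - l) / b)"
  define y where "y = exp (- (q' - q) / b)"
  have x: "0 < x" "x \<le> 1" using assms bpos by (auto simp: x_def divide_nonpos_pos)
  have y: "0 < y" "y \<le> 1" using assms bpos by (auto simp: y_def divide_nonpos_pos)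
  have xy: "exp (- (q' - l) / b) = x * y" unfolding x_def y_def exp_add[symmetric]
    by (simp add: field_simps add_divide_distrib diff_divide_distrib)
  have s1: "- (u - l) / b - - (q' - l) / b = - (u - q') / b" using bpos by (simp add: field_simps)
  have E1: "exp (- (u - q') / b) = E / (x*y)" unfolding xy[symmetric] exp_diff[symmetric] s1 ..
  have s2: "- (u - l) / b - - (q - l) / b = - (u - q) / b" using bpos by (simp add: field_simps)
  have E2: "exp (- (u - q) / b) = E / x" unfolding x_def exp_diff[symmetric] s2 ..
  have s3: "- (u - l) / b - - (q' - q) / b = - (u - (l + (q' - q))) / b" using bpos by (simp add: field_simps)
  have E3: "exp (- (u - (l + (q' - q))) / b) = E / y" unfolding y_def exp_diff[symmetric] s3 ..
  have Ele: "E \<le> x * y" unfolding xy[symmetric] using assms bpos by (auto simp: divide_simps)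
  have Ep: "0 < E" by simp
  have Kq': "K l u b q' = (2 - x*y - E/(x*y))/2" unfolding K_def xy E1 using x y by (simp add: field_simps)
  have Kq: "K l u b q = (2 - x - E/x)/2" unfolding K_def x_def[symmetric] E2 using x by (simp add: field_simps)
  have Kd: "K l u b (l + (q' - q)) = (2 - y - E/y)/2" unfolding K_def E3 y_def by (simp add: field_simps)
  have Kl: "K l u b l = (1 - E)/2" unfolding K_def by (simp add: field_simps)
  have P: "K l u b q' * K l u b l \<le> K l u b (l + (q' - q)) * K l u b q"
    unfolding Kq' Kq Kd Kl using poly_ineq[OF x y Ep Ele] by simp
  have p1: "K l u b q > 0" using K_pos assms by simp
  have p2: "K l u b l > 0" using K_pos lu by simp
  show ?thesis using P p1 p2 by (simp add: divide_simps)
qed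

lemma ratio_bound:
  assumes "l \<le> q" "q \<le> u" "l \<le> q'" "q' \<le> u"
  shows "K l u b q' / K l u b q \<le> K l u b (l + \<bar>q' - q\<bar>) / K l u b l"
proof (cases "q \<le> q'")
  case True then show ?thesis using case1 assms by simp
next
  case False
  have "K l u b (l + u - q') / K l u b (l + u - q) \<le> K l u b (l + ((l + u - q') - (l + u - q))) / K l u b l"
    using False assms by (intro case1) auto
  then show ?thesis using False by (simp add: K_sym)
qed

lemma mono_d:
  assumes "0 \<le> d" "d \<le> e" "e \<le> u - l"
  shows "K l u b (l + d) * exp (d / b) \<le> K l u b (l + e) * exp (e / b)"
proof -
  define s where "s = exp (d / b)"
  define t where "t = exp (e / b)"
  have st: "0 < s" "s \<le> t" using assms bpos by (auto simp: s_def t_def divide_right_mono)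
  have F1: "exp (- (u - (l + d)) / b) = E * s" unfolding s_def exp_add[symmetric] by (simp add: field_simps add_divide_distrib diff_divide_distrib)
  have F2: "exp (- (u - (l + e)) / b) = E * t" unfolding t_def exp_add[symmetric] by (simp add: field_simps add_divide_distrib diff_divide_distrib)
  have F3: "exp (- (l + d - l) / b) = 1 / s" unfolding s_def by (simp add: exp_minus field_simps)
  have F4: "exp (- (l + e - l) / b) = 1 / t" unfolding t_def by (simp add: exp_minus field_simps)
  have Et: "E * t \<le> 1" unfolding F2[symmetric] using assms bpos by (auto simp: divide_simps)
  have Es: "E * s \<le> 1" using Et st by (smt (verit) exp_gt_zero mult_left_mono)
  have L: "K l u b (l + d) * s = s - 1/2 - E * s * s / 2" unfolding K_def F1 F3 using st by (simp add: field_simps)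
  have R: "K l u b (l + e) * t = t - 1/2 - E * t * t / 2" unfolding K_def F2 F4 using st by (simp add: field_simps)
  have "(t - s) * (2 - E * t - E * s) \<ge> 0" using st Et Es by simp
  then have "s - 1/2 - E * s * s / 2 \<le> t - 1/2 - E * t * t / 2" by (simp add: algebra_simps)
  then show ?thesis using L R s_def t_def by simp
qed

end

theorem lemma3p2:
  fixes l u b dQ :: real
  assumes "l < u" and "b > 0" and "0 < dQ" and "dQ \<le> u - l"
  defines "C \<equiv> laplace_mass l u b"
  shows "(GREATEST v. v \<in> {C q' / C q * exp (\<bar>q' - q\<bar> / b) | q q'.
              q \<in> {l..u} \<and> q' \<in> {l..u} \<and> \<bar>q' - q\<bar> \<le> dQ})
         = C (l + dQ) / C l * exp (dQ / b)"
proof (rule Greatest_equality)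
  interpret setting l u b using assms by unfold_locales auto
  have CK: "C p = K l u b p" if "l \<le> p" "p \<le> u" for p
    unfolding C_def using mass_eq[OF assms(2) that] .
  show "C (l + dQ) / C l * exp (dQ / b) \<in> {C q' / C q * exp (\<bar>q' - q\<bar> / b) | q q'.
              q \<in> {l..u} \<and> q' \<in> {l..u} \<and> \<bar>q' - q\<bar> \<le> dQ}"
    using assms by (intro CollectI exI[of _ l] exI[of _ "l + dQ"]) auto
  fix y assume "y \<in> {C q' / C q * exp (\<bar>q' - q\<bar> / b) | q q'.
              q \<in> {l..u} \<and> q' \<in> {l..u} \<and> \<bar>q' - q\<bar> \<le> dQ}"
  then obtain q q' where y: "y = C q' / C q * exp (\<bar>q' - q\<bar> / b)"
    and q: "l \<le> q" "q \<le> u" "l \<le> q'" "q' \<le> u" and d: "\<bar>q' - q\<bar> \<le> dQ" by auto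
  have Kl: "K l u b l > 0" using K_pos assms by simp
  have "y = K l u b q' / K l u b q * exp (\<bar>q' - q\<bar> / b)" using y q CK by simp
  also have "\<dots> \<le> K l u b (l + \<bar>q' - q\<bar>) / K l u b l * exp (\<bar>q' - q\<bar> / b)"
    using ratio_bound[OF q] by (intro mult_right_mono) auto
  also have "\<dots> = (K l u b (l + \<bar>q' - q\<bar>) * exp (\<bar>q' - q\<bar> / b)) / K l u b l" by simp
  also have "\<dots> \<le> (K l u b (l + dQ) * exp (dQ / b)) / K l u b l"
    using mono_d[of "\<bar>q' - q\<bar>" dQ] d assms Kl by (intro divide_right_mono) auto
  also have "\<dots> = C (l + dQ) / C l * exp (dQ / b)" using CK assms by simp
  finally show "y \<le> C (l + dQ) / C l * exp (dQ / b)" .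
qed

end
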